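(* Consider the system $x^+=f(x,u)$, $y=h(x)$ with $f:\mathcal{X}\times\mathcal{U}\to\mathcal{X}$, $h:\mathcal{X}\to\mathcal{Y}$, $\mathcal{X}\subset\mathbb{R}^n$, $\mathcal{Y}\subset\mathbb{R}^m$, $\mathcal{U}\subset\mathbb{R}^q$. Suppose: (A1) there exists an integer $p\ge1$ such that for every $x\in\mathcal{X}$ the set $[x]_{p-1}$ is either a singleton or empty; and (A2) for all $x,\hat x\in\mathcal{X}$ and all $k\ge0$, $\hat x\in[x]_k^+$ implies $[\hat x]_k^+=[x]_k^+$. With $p$ as in (A1), let $\pi(\hat x,y):=\max\{j\in\{-1,0,\ldots,p-2\}:[\hat x]_j^+\cap h^{-1}(y)\ne\emptyset\}$. Then the system $$\hat x^+\in f\big([\hat x]^+_{\pi(\hat x,y)}\cap h^{-1}(y),\,u\big)$$ is a deadbeat observer for $x^+=f(x,u)$, $y=h(x)$.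
   Context: $h^{-1}(y):=\{\eta\in\mathcal{X}:h(\eta)=y\}$; $f(S,u):=\{f(s,u):s\in S\}$; for a set $S$, $[S]_k:=\bigcup_{s\in S}[s]_k$. Define $[x]_0:=h^{-1}(h(x))$, and for $k\ge0$: $[x]_k^+:=\bigcup_{(\eta,u)\in\mathcal{X}\times\mathcal{U}:\ f(\eta,u)=x} f([\eta]_k,u)$, $[x]_{k+1}:=[x]_k^+\cap[x]_0$; additionally $[x]_{-1}^+:=\mathcal{X}$. For an input sequence $\mathbf{u}=(u_0,u_1,\ldots)$ with $u_k\in\mathcal{U}$, the solution is $\phi(0,x,\mathbf{u})=x$, $\phi(k+1,x,\mathbf{u})=f(\phi(k,x,\mathbf{u}),u_k)$. Given $g:\mathcal{X}\times\mathcal{Y}\times\mathcal{U}\rightrightarrows\mathcal{X}$, a solution of $\hat x^+\in g(\hat x,h(x),u)$ is any sequence $\psi(k,\hat x,x,\mathbf{u})$ with $\psi(0,\hat x,x,\mathbf{u})=\hat x$, $\psi(k+1,\hat x,x,\mathbf{u})\in g(\psi(k,\hat x,x,\mathbf{u}),h(\phi(k,x,\mathbf{u})),u_k)$. The system $\hat x^+\in g(\hat x,y,u)$ is a deadbeat observer for $x^+=f(x,u),\,y=h(x)$ if there is an integer $q\ge1$ such that such solutions satisfy $\psi(k,\hat x,x,\mathbf{u})=\phi(k,x,\mathbf{u})$ for all $x,\hat x\in\mathcal{X}$, all input sequences $\mathbf{u}$, and all $k\ge q$. *)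

theory Defs
  imports "HOL-Analysis.Analysis"
begin

definition preim :: "'x set \<Rightarrow> ('x \<Rightarrow> 'y) \<Rightarrow> 'y \<Rightarrow> 'x set" where
  "preim X h y = {\<eta> \<in> X. h \<eta> = y}"

text \<open>cls X U f h k x is [x]_k:  [x]_0 = h^{-1}(h x),
  [x]_{k+1} = [x]_k^+ \<inter> [x]_0, with [x]_k^+ the union of f([\<eta>]_k,u) over (\<eta>,u) in X \<times> U with f \<eta> u = x.\<close>
primrec cls :: "'x set \<Rightarrow> 'u set \<Rightarrow> ('x \<Rightarrow> 'u \<Rightarrow> 'x) \<Rightarrow> ('x \<Rightarrow> 'y) \<Rightarrow> nat \<Rightarrow> 'x \<Rightarrow> 'x set" where
  "cls X U f h 0 x = preim X h (h x)"
| "cls X U f h (Suc k) x =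
     (\<Union>{(\<lambda>s. f s u) ` cls X U f h k \<eta> | \<eta> u. \<eta> \<in> X \<and> u \<in> U \<and> f \<eta> u = x})
     \<inter> preim X h (h x)"

definition clsp :: "'x set \<Rightarrow> 'u set \<Rightarrow> ('x \<Rightarrow> 'u \<Rightarrow> 'x) \<Rightarrow> ('x \<Rightarrow> 'y) \<Rightarrow> nat \<Rightarrow> 'x \<Rightarrow> 'x set" where
  "clsp X U f h k x =
     \<Union>{(\<lambda>s. f s u) ` cls X U f h k \<eta> | \<eta> u. \<eta> \<in> X \<and> u \<in> U \<and> f \<eta> u = x}"

definition clspi :: "'x set \<Rightarrow> 'u set \<Rightarrow> ('x \<Rightarrow> 'u \<Rightarrow> 'x) \<Rightarrow> ('x \<Rightarrow> 'y) \<Rightarrow> int \<Rightarrow> 'x \<Rightarrow> 'x set" where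
  "clspi X U f h j x = (if j < 0 then X else clsp X U f h (nat j) x)"

definition piidx :: "'x set \<Rightarrow> 'u set \<Rightarrow> ('x \<Rightarrow> 'u \<Rightarrow> 'x) \<Rightarrow> ('x \<Rightarrow> 'y) \<Rightarrow> nat \<Rightarrow> 'x \<Rightarrow> 'y \<Rightarrow> int" where
  "piidx X U f h p xh y =
     Max {j \<in> {-1 .. int p - 2}. clspi X U f h j xh \<inter> preim X h y \<noteq> {}}"

definition obs :: "'x set \<Rightarrow> 'u set \<Rightarrow> ('x \<Rightarrow> 'u \<Rightarrow> 'x) \<Rightarrow> ('x \<Rightarrow> 'y) \<Rightarrow> nat \<Rightarrow> 'x \<Rightarrow> 'y \<Rightarrow> 'u \<Rightarrow> 'x set" where
  "obs X U f h p xh y u =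
     (\<lambda>s. f s u) ` (clspi X U f h (piidx X U f h p xh y) xh \<inter> preim X h y)"

primrec traj :: "('x \<Rightarrow> 'u \<Rightarrow> 'x) \<Rightarrow> nat \<Rightarrow> 'x \<Rightarrow> (nat \<Rightarrow> 'u) \<Rightarrow> 'x" where
  "traj f 0 x us = x"
| "traj f (Suc k) x us = f (traj f k x us) (us k)"

definition deadbeat_observer ::
  "'x set \<Rightarrow> 'u set \<Rightarrow> ('x \<Rightarrow> 'u \<Rightarrow> 'x) \<Rightarrow> ('x \<Rightarrow> 'y) \<Rightarrow> ('x \<Rightarrow> 'y \<Rightarrow> 'u \<Rightarrow> 'x set) \<Rightarrow> bool" where
  "deadbeat_observer X U f h g \<longleftrightarrow>
     (\<exists>q::nat. q \<ge> 1 \<and>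
       (\<forall>x \<in> X. \<forall>xh \<in> X. \<forall>us :: nat \<Rightarrow> 'u. (\<forall>k. us k \<in> U) \<longrightarrow>
         (\<forall>psi :: nat \<Rightarrow> 'x. psi 0 = xh \<and>
              (\<forall>k. psi (Suc k) \<in> g (psi k) (h (traj f k x us)) (us k)) \<longrightarrow>
            (\<forall>k \<ge> q. psi k = traj f k x us))))"

end

theory Submission
  imports Defs
begin

lemma cls_sub_X: "cls X U f h k y \<subseteq> X"
  by (cases k) (auto simp: preim_def)

lemma clsp_mono_cls:
  assumes "\<And>\<eta>. A \<eta> \<subseteq> B \<eta>"
  shows "\<Union>{(\<lambda>s. f s u) ` A \<eta> | \<eta> u. \<eta> \<in> X \<and> u \<in> U \<and> f \<eta> u = x}
       \<subseteq> \<Union>{(\<lambda>s. f s u) ` B \<eta> | \<eta> u. \<eta> \<in> X \<and> u \<in> U \<and> f \<eta> u = x}"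
  using assms by blast

lemma cls_Suc_eq: "cls X U f h (Suc k) y = clsp X U f h k y \<inter> preim X h (h y)"
  by (simp add: clsp_def)

lemma cls_Suc_sub: "cls X U f h (Suc k) y \<subseteq> cls X U f h k y"
proof (induction k arbitrary: y)
  case 0
  then show ?case by auto
next
  case (Suc k)
  have "clsp X U f h (Suc k) y \<subseteq> clsp X U f h k y"
    unfolding clsp_def by (rule clsp_mono_cls) (rule Suc.IH)
  then show ?case unfolding cls_Suc_eq[of X U f h "Suc k" y] cls_Suc_eq[of X U f h k y] by blast
qed

lemma cls_mono: "j \<le> k \<Longrightarrow> cls X U f h k y \<subseteq> cls X U f h j y"
proof (induction k rule: dec_induct)
  case base then show ?case by simp
next
  case (step n) then show ?case using cls_Suc_sub[of X U f h n y] by blast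
qed

lemma clsp_mono: "j \<le> k \<Longrightarrow> clsp X U f h k y \<subseteq> clsp X U f h j y"
  unfolding clsp_def by (rule clsp_mono_cls) (rule cls_mono)

lemma clsp_img: "\<eta> \<in> X \<Longrightarrow> u \<in> U \<Longrightarrow> s \<in> cls X U f h k \<eta> \<Longrightarrow> f s u \<in> clsp X U f h k (f \<eta> u)"
  unfolding clsp_def by blast

lemma traj_X: "x \<in> X \<Longrightarrow> \<forall>k. us k \<in> U \<Longrightarrow> \<forall>x \<in> X. \<forall>u \<in> U. f x u \<in> X \<Longrightarrow> traj f k x us \<in> X"
  by (induction k) auto

lemma traj_cls:
  assumes "x \<in> X" "\<forall>k. us k \<in> U" "\<forall>x \<in> X. \<forall>u \<in> U. f x u \<in> X"
  shows "\<forall>j \<le> k. traj f k x us \<in> cls X U f h j (traj f k x us)"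
proof (induction k)
  case 0
  then show ?case using assms by (auto simp: preim_def)
next
  case (Suc k)
  have X1: "traj f (Suc k) x us \<in> X" using traj_X[OF assms] .
  have Xk: "traj f k x us \<in> X" using traj_X[OF assms] .
  show ?case
  proof (intro allI impI)
    fix j assume j: "j \<le> Suc k"
    show "traj f (Suc k) x us \<in> cls X U f h j (traj f (Suc k) x us)"
    proof (cases j)
      case 0 then show ?thesis using X1 by (simp add: preim_def)
    next
      case (Suc j')
      with j Suc.IH have IHj: "traj f k x us \<in> cls X U f h j' (traj f k x us)" by auto
      have "traj f (Suc k) x us \<in> clsp X U f h j' (traj f (Suc k) x us)"
        using clsp_img[OF Xk assms(2)[rule_format] IHj] by simp
      then show ?thesis unfolding Suc cls_Suc_eq using X1 by (simp add: preim_def)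
    qed
  qed
qed

theorem theorem4:
  fixes X :: "(real ^ 'n) set" and Y :: "(real ^ 'm) set" and U :: "(real ^ 'q) set"
    and f :: "real ^ 'n \<Rightarrow> real ^ 'q \<Rightarrow> real ^ 'n"
    and h :: "real ^ 'n \<Rightarrow> real ^ 'm"
    and p :: nat
  assumes f_maps: "\<forall>x \<in> X. \<forall>u \<in> U. f x u \<in> X"
    and h_maps: "\<forall>x \<in> X. h x \<in> Y"
    and A1: "p \<ge> 1 \<and> (\<forall>x \<in> X. (\<exists>a. cls X U f h (p - 1) x = {a}) \<or> cls X U f h (p - 1) x = {})"
    and A2: "\<forall>x \<in> X. \<forall>xh \<in> X. \<forall>k. xh \<in> clsp X U f h k x \<longrightarrow> clsp X U f h k xh = clsp X U f h k x"
  shows "deadbeat_observer X U f h (obs X U f h p)"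
  unfolding deadbeat_observer_def
proof (intro exI[of _ p] conjI ballI allI impI)
  show "1 \<le> p" using A1 by simp
  fix x xh us psi k
  assume x: "x \<in> X" and xh: "xh \<in> X" and us: "\<forall>k. us k \<in> U"
    and psi: "psi 0 = xh \<and> (\<forall>k. psi (Suc k) \<in> obs X U f h p (psi k) (h (traj f k x us)) (us k))"
    and kp: "p \<le> k"
  define xt where "xt = (\<lambda>k. traj f k x us)"
  have xtX: "\<And>k. xt k \<in> X" using traj_X[OF x us f_maps] unfolding xt_def .
  have xtS: "\<And>k. xt (Suc k) = f (xt k) (us k)" unfolding xt_def by simp
  have xtc: "\<And>j k. j \<le> k \<Longrightarrow> xt k \<in> cls X U f h j (xt k)"
    unfolding xt_def using traj_cls[OF x us f_maps] by blast
  have gen: "\<exists>s. s \<in> clspi X U f h (piidx X U f h p (psi k) (h (xt k))) (psi k) \<inter> preim X h (h (xt k))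
              \<and> psi (Suc k) = f s (us k)" for k
  proof -
    have "psi (Suc k) \<in> (\<lambda>s. f s (us k)) ` (clspi X U f h (piidx X U f h p (psi k) (h (xt k))) (psi k) \<inter> preim X h (h (xt k)))"
      using psi unfolding obs_def xt_def by simp
    then show ?thesis by (elim imageE) blast
  qed
  have S: "\<exists>s. s \<in> cls X U f h (min k (p - 1)) (xt k) \<and> psi (Suc k) = f s (us k)" for k
  proof (induction k)
    case 0
    then show ?case using gen[of 0] by auto
  next
    case (Suc k)
    from Suc.IH obtain s0 where s0: "s0 \<in> cls X U f h (min k (p - 1)) (xt k)"
      and ps0: "psi (Suc k) = f s0 (us k)" by blast
    obtain s where s: "s \<in> clspi X U f h (piidx X U f h p (psi (Suc k)) (h (xt (Suc k)))) (psi (Suc k))"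
      and sp: "s \<in> preim X h (h (xt (Suc k)))" and ps: "psi (Suc (Suc k)) = f s (us (Suc k))"
      using gen[of "Suc k"] by blast
    show ?case
    proof (cases "p = 1")
      case True
      then show ?thesis using sp ps by auto
    next
      case False
      with A1 have p2: "p \<ge> 2" by simp
      define m' where "m' = min k (p - 2)"
      have psiX: "psi (Suc k) \<in> X" using f_maps[rule_format, OF subsetD[OF cls_sub_X s0] us[rule_format]] ps0 by simp
      have "psi (Suc k) \<in> clsp X U f h (min k (p - 1)) (xt (Suc k))"
        using clsp_img[OF xtX us[rule_format] s0] ps0 xtS by simp
      moreover have le: "m' \<le> min k (p - 1)" unfolding m'_def by simp
      ultimately have pin: "psi (Suc k) \<in> clsp X U f h m' (xt (Suc k))"
        by (meson clsp_mono subsetD)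
      have eq: "clsp X U f h m' (psi (Suc k)) = clsp X U f h m' (xt (Suc k))"
        using A2[rule_format, OF xtX psiX pin] .
      have "xt (Suc k) \<in> cls X U f h (Suc m') (xt (Suc k))"
        using xtc[of "Suc m'" "Suc k"] unfolding m'_def by simp
      then have "xt (Suc k) \<in> clsp X U f h m' (xt (Suc k)) \<inter> preim X h (h (xt (Suc k)))"
        unfolding cls_Suc_eq .
      then have xin: "xt (Suc k) \<in> clsp X U f h m' (psi (Suc k)) \<inter> preim X h (h (xt (Suc k)))"
        using eq by simp
      define J where "J = {j \<in> {-1 .. int p - 2}. clspi X U f h j (psi (Suc k)) \<inter> preim X h (h (xt (Suc k))) \<noteq> {}}"
      have fin: "finite J" unfolding J_def by (rule finite_subset[of _ "{-1 .. int p - 2}"]) auto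
      have mJ: "int m' \<in> J" unfolding J_def clspi_def using xin p2 unfolding m'_def by auto
      have pige: "int m' \<le> piidx X U f h p (psi (Suc k)) (h (xt (Suc k)))"
        unfolding piidx_def J_def[symmetric] using Max_ge[OF fin mJ] .
      then have "clspi X U f h (piidx X U f h p (psi (Suc k)) (h (xt (Suc k)))) (psi (Suc k))
                   \<subseteq> clsp X U f h m' (psi (Suc k))"
      proof -
        let ?P = "piidx X U f h p (psi (Suc k)) (h (xt (Suc k)))"
        have "m' \<le> nat ?P" using pige by linarith
        then have "clsp X U f h (nat ?P) (psi (Suc k)) \<subseteq> clsp X U f h m' (psi (Suc k))"
          by (rule clsp_mono)
        moreover have "\<not> ?P < 0" using pige by linarith
        ultimately show ?thesis unfolding clspi_def by simp
      qed
      with s sp eq have "s \<in> clsp X U f h m' (xt (Suc k)) \<inter> preim X h (h (xt (Suc k)))" by auto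
      then have "s \<in> cls X U f h (Suc m') (xt (Suc k))" unfolding cls_Suc_eq .
      moreover have "Suc m' = min (Suc k) (p - 1)" unfolding m'_def using p2 by auto
      ultimately show ?thesis using ps by auto
    qed
  qed
  obtain k' where k': "k = Suc k'" using kp A1 by (cases k) auto
  from S[of k'] obtain s where s: "s \<in> cls X U f h (p - 1) (xt k')" and ps: "psi k = f s (us k')"
  proof -
    have "min k' (p - 1) = p - 1" using k' kp by simp
    then show ?thesis using that S[of k'] k' by auto
  qed
  have "xt k' \<in> cls X U f h (p - 1) (xt k')" using xtc k' kp by simp
  with s A1 xtX have "s = xt k'" by (metis empty_iff singletonD)
  then show "psi k = traj f k x us" using ps k' xtS unfolding xt_def by simp
qed

end
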